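(* Let $X$ be an $n$-globular set, $k\le n$, and let $D\in T_n^{D^s}(X)_k$ be a labelled simple $k$-string diagram which is nontrivial and not a block. Then there is a unique element $y\in T_n^{D^s}(T_n^{D^s}(X))_k$ whose underlying diagram is a block $B$ and whose minimal labels are $D_1,\dots,D_\ell\in T_n^{D^s}(X)$, such that $\mu_X(y)=D$, each $D_j$ is nontrivial, $m(B)=M(D)$, $M(D_j)<M(D)$ for all $j$, and $\ell=\ell_{M(D)}(D)$.
   Context: An $n$-globular set $X$: sets $X_0,\dots,X_n$ and maps $s,t\colon X_k\to X_{k-1}$ with $ss=st$, $ts=tt$. $\langle\ell\rangle=\{1<\dots<\ell\}$. A simple $k$-string diagram $D$: numbers $\ell_0=1,\ell_1,\dots,\ell_k\ge0$ and arbitrary functions $v^m\colon\langle\ell_m\rangle\to\langle\ell_{m-1}\rangle$; its source and target are both $(v^1,\dots,v^{k-1})$. An $X$-labelling of $D$: elements $x^m_i\in X_m$ ($0\le m\le k$, $1\le i\le\ell_m$) such that for $m\ge1$, $s(x^m_i)=x^{m-1}_{v^m(i)}$ if $i=\min\{j:v^m(j)=v^m(i)\}$ and otherwise $s(x^m_i)=t(x^m_p)$ with $p=\max\{j<i:v^m(j)=v^m(i)\}$. The source of $(D,x)$ is $(s(D),(x^m_i)_{m\le k-1})$; its target is the same except that for $i\in\mathrm{im}(v^k)$ the label $x^{k-1}_i$ is replaced by $t(x^k_p)$, $p=\max\{j:v^k(j)=i\}$. $T_n^{D^s}(X)_k$ is the set of $X$-labelled simple $k$-string diagrams; with these source/target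 maps it is an $n$-globular set. The multiplication $\mu_X\colon T_n^{D^s}(T_n^{D^s}(X))\to T_n^{D^s}(X)$: if a $k$-diagram $D$ is labelled by labelled $m$-diagrams $E^m_i$ with underlying diagrams $D^m_i$ (compatibility forces $\ell_j(D^m_i)=\ell_j(D^{m-1}_{v^m(i)})$, $v^j(D^m_i)=v^j(D^{m-1}_{v^m(i)})$ for $j<m$), the composite has level-$m$ set $\coprod_{i=1}^{\ell_m}\langle\ell_m(D^m_i)\rangle$, ordered by component index first and then internally, with map to level $m-1$ sending $a$ in component $i$ to $v^m(D^m_i)(a)$ in component $v^m(i)$, and with $a$ in component $i$ at level $m$ labelled by the $m$-dimensional label at $a$ of $E^m_i$. All notions below for labelled diagrams refer to the underlying diagram. A $k$-diagram $D$ is nondegenerate if $\ell_i(D)>0$ for all $1\le i\le k$, and nontrivial if it is nondegenerate and $\ell_i(D)>1$ for some $i$. For nontrivial $D$: $m(D)=\min\{j:\ell_j(D)>1\}$, $M(D)=\max\{j:\ell_j(D)>1\}$. A block is a nontrivial $D$ with $m(D)=M(D)$. The blocks are exactly: $B^k(i,\ell,p)$ for $1\le i<k$, $\ell>1$, $1\le p\le\ell$, with $\ell_i=\ell$, $\ell_j=1$ for $j\ne i$, $v^{i+1}=(p)$ (all other maps constant); and $B^k(k,\ell)$ for $\ell>1$, with $\ell_k=\ell$ and $\ell_j=1$ for $j<k$. A labelling of a block is determined by its minimal labels $x_1,\dots,x_\ell$: for $B^k(i,\ell,p)$, $x_j=x^i_j$ for $j\ne p$ and $x_p=x^k_1$;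 for $B^k(k,\ell)$, $x_j=x^k_j$. *)

theory Defs
  imports Main
begin

record 'a gset =
  cells :: "nat \<Rightarrow> 'a set"
  src :: "nat \<Rightarrow> 'a \<Rightarrow> 'a"
  tgt :: "nat \<Rightarrow> 'a \<Rightarrow> 'a"

definition globular :: "nat \<Rightarrow> 'a gset \<Rightarrow> bool" where
  "globular n X \<longleftrightarrow>
     (\<forall>k\<in>{1..n}. \<forall>x\<in>cells X k. src X k x \<in> cells X (k - 1) \<and> tgt X k x \<in> cells X (k - 1)) \<and>
     (\<forall>k\<in>{2..n}. \<forall>x\<in>cells X k.
        src X (k - 1) (src X k x) = src X (k - 1) (tgt X k x) \<and>
        tgt X (k - 1) (src X k x) = tgt X (k - 1) (tgt X k x))"

text \<open>A labelled simple k-string diagram: dimension k, numbers len m = l_m,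
  maps vmap m : <l_m> -> <l_(m-1)>, labels lab m i = x^m_i. Positions are 1-based.
  Outside the meaningful range the data are fixed to canonical defaults
  (len = 0, vmap = 0, lab = undefined), so that equality of records is equality of
  labelled diagrams.\<close>

record 'a ldiag =
  dim :: nat
  len :: "nat \<Rightarrow> nat"
  vmap :: "nat \<Rightarrow> nat \<Rightarrow> nat"
  lab :: "nat \<Rightarrow> nat \<Rightarrow> 'a"

definition canonical :: "'a ldiag \<Rightarrow> bool" where
  "canonical D \<longleftrightarrow>
     len D 0 = 1 \<and>
     (\<forall>m. dim D < m \<longrightarrow> len D m = 0) \<and>
     (\<forall>m i. \<not> (1 \<le> m \<and> m \<le> dim D \<and> 1 \<le> i \<and> i \<le> len D m) \<longrightarrow> vmap D m i = 0) \<and>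
     (\<forall>m i. \<not> (m \<le> dim D \<and> 1 \<le> i \<and> i \<le> len D m) \<longrightarrow> lab D m i = undefined)"

definition diag_ok :: "'a ldiag \<Rightarrow> bool" where
  "diag_ok D \<longleftrightarrow> canonical D \<and>
     (\<forall>m\<in>{1..dim D}. \<forall>i\<in>{1..len D m}. vmap D m i \<in> {1..len D (m - 1)})"

definition labelling_ok :: "'b gset \<Rightarrow> 'b ldiag \<Rightarrow> bool" where
  "labelling_ok X D \<longleftrightarrow>
     (\<forall>m\<le>dim D. \<forall>i\<in>{1..len D m}. lab D m i \<in> cells X m) \<and>
     (\<forall>m\<in>{1..dim D}. \<forall>i\<in>{1..len D m}.
        (let P = {j\<in>{1..<i}. vmap D m j = vmap D m i} in
          if P = {} then src X m (lab D m i) = lab D (m - 1) (vmap D m i)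
          else src X m (lab D m i) = tgt X m (lab D m (Max P))))"

definition lwf :: "'b gset \<Rightarrow> nat \<Rightarrow> 'b ldiag \<Rightarrow> bool" where
  "lwf X k D \<longleftrightarrow> dim D = k \<and> diag_ok D \<and> labelling_ok X D"

definition dsrc :: "'b ldiag \<Rightarrow> 'b ldiag" where
  "dsrc D = \<lparr> dim = dim D - 1,
              len = (\<lambda>m. if m < dim D then len D m else 0),
              vmap = (\<lambda>m i. if m < dim D then vmap D m i else 0),
              lab = (\<lambda>m i. if m < dim D then lab D m i else undefined) \<rparr>"

definition dtgt :: "'b gset \<Rightarrow> 'b ldiag \<Rightarrow> 'b ldiag" where
  "dtgt X D = \<lparr> dim = dim D - 1,
              len = (\<lambda>m. if m < dim D then len D m else 0),
              vmap = (\<lambda>m i. if m < dim D then vmap D m i else 0),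
              lab = (\<lambda>m i. if m < dim D then
                        (if m = dim D - 1 \<and> i \<in> vmap D (dim D) ` {1..len D (dim D)}
                         then tgt X (dim D) (lab D (dim D)
                                (Max {j\<in>{1..len D (dim D)}. vmap D (dim D) j = i}))
                         else lab D m i)
                      else undefined) \<rparr>"

text \<open>The n-globular set T_n^{D^s}(X) (levels above n are irrelevant).\<close>
definition TD :: "'b gset \<Rightarrow> 'b ldiag gset" where
  "TD X = \<lparr> cells = (\<lambda>k. {D. lwf X k D}), src = (\<lambda>k D. dsrc D), tgt = (\<lambda>k D. dtgt X D) \<rparr>"

definition off :: "'b ldiag ldiag \<Rightarrow> nat \<Rightarrow> nat \<Rightarrow> nat" where
  "off E m i = (\<Sum>i'\<in>{1..<i}. len (lab E m i') m)"

definition comp :: "'b ldiag ldiag \<Rightarrow> nat \<Rightarrow> nat \<Rightarrow> nat" where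
  "comp E m g = (LEAST i. g \<le> off E m (Suc i))"

definition inner :: "'b ldiag ldiag \<Rightarrow> nat \<Rightarrow> nat \<Rightarrow> nat" where
  "inner E m g = g - off E m (comp E m g)"

definition mu :: "'b ldiag ldiag \<Rightarrow> 'b ldiag" where
  "mu E = \<lparr> dim = dim E,
            len = (\<lambda>m. if m \<le> dim E then off E m (Suc (len E m)) else 0),
            vmap = (\<lambda>m g. if 1 \<le> m \<and> m \<le> dim E \<and> 1 \<le> g \<and> g \<le> off E m (Suc (len E m))
                     then off E (m - 1) (vmap E m (comp E m g))
                          + vmap (lab E m (comp E m g)) m (inner E m g)
                     else 0),
            lab = (\<lambda>m g. if m \<le> dim E \<and> 1 \<le> g \<and> g \<le> off E m (Suc (len E m))
                     then lab (lab E m (comp E m g)) m (inner E m g)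
                     else undefined) \<rparr>"

definition nondegenerate :: "'b ldiag \<Rightarrow> bool" where
  "nondegenerate D \<longleftrightarrow> (\<forall>i\<in>{1..dim D}. 0 < len D i)"

definition nontrivial :: "'b ldiag \<Rightarrow> bool" where
  "nontrivial D \<longleftrightarrow> nondegenerate D \<and> (\<exists>i\<in>{1..dim D}. 1 < len D i)"

definition mlev :: "'b ldiag \<Rightarrow> nat" where
  "mlev D = Min {j. 1 < len D j}"

definition Mlev :: "'b ldiag \<Rightarrow> nat" where
  "Mlev D = Max {j. 1 < len D j}"

definition is_block :: "'b ldiag \<Rightarrow> bool" where
  "is_block D \<longleftrightarrow> nontrivial D \<and> mlev D = Mlev D"

text \<open>Minimal labels x_1..x_l of a labelled block (l = len at level M):
  for B^k(i,l,p) with i<k, x_p = x^k_1 and x_j = x^i_j otherwise;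
  for B^k(k,l), x_j = x^k_j.\<close>
definition minlab :: "'b ldiag \<Rightarrow> nat \<Rightarrow> 'b" where
  "minlab B j = (if Mlev B < dim B \<and> j = vmap B (Suc (Mlev B)) 1
                 then lab B (dim B) 1 else lab B (Mlev B) j)"

end

theory Submission
  imports Defs
begin



lemma dsrc_simps[simp]:
  "dim (dsrc E) = dim E - 1"
  "len (dsrc E) m = (if m < dim E then len E m else 0)"
  "vmap (dsrc E) m i = (if m < dim E then vmap E m i else 0)"
  "lab (dsrc E) m i = (if m < dim E then lab E m i else undefined)"
  by (simp_all add: dsrc_def)

lemma ldiag_ext:
  assumes c1: "canonical E1" and c2: "canonical E2" and d1: "dim E1 = j" and d2: "dim E2 = j"
    and ds: "0 < j \<Longrightarrow> dsrc E1 = dsrc E2" and ln: "len E1 j = len E2 j"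
    and top: "\<And>b. 1 \<le> b \<Longrightarrow> b \<le> len E1 j \<Longrightarrow> (0 < j \<longrightarrow> vmap E1 j b = vmap E2 j b) \<and> lab E1 j b = lab E2 j b"
  shows "E1 = E2"
proof (rule ldiag.equality)
  show "dim E1 = dim E2" using d1 d2 by simp
  have lenlow: "len E1 m = len E2 m" if "m < j" for m
  proof -
    have "len (dsrc E1) m = len (dsrc E2) m" using ds that by simp
    then show ?thesis using that d1 d2 by simp
  qed
  show L: "len E1 = len E2"
  proof
    fix m
    show "len E1 m = len E2 m"
    proof (cases "m < j")
      case True then show ?thesis by (rule lenlow)
    next
      case False
      then show ?thesis using ln c1 c2 d1 d2 unfolding canonical_def
        by (metis le_neq_implies_less not_le)
    qed
  qed
  show "vmap E1 = vmap E2"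
  proof (intro ext)
    fix m b
    show "vmap E1 m b = vmap E2 m b"
    proof (cases "m < j")
      case True
      have "vmap (dsrc E1) m b = vmap (dsrc E2) m b" using ds True by simp
      then show ?thesis using True d1 d2 by simp
    next
      case False
      show ?thesis
      proof (cases "m = j \<and> 1 \<le> m \<and> 1 \<le> b \<and> b \<le> len E1 j")
        case True then show ?thesis using top by auto
      next
        case F2: False
        then have "\<not> (1 \<le> m \<and> m \<le> dim E1 \<and> 1 \<le> b \<and> b \<le> len E1 m)"
             "\<not> (1 \<le> m \<and> m \<le> dim E2 \<and> 1 \<le> b \<and> b \<le> len E2 m)"
          using False d1 d2 L by auto
        then show ?thesis using c1 c2 unfolding canonical_def by metis
      qed
    qed
  qed
  show "lab E1 = lab E2"
  proof (intro ext)
    fix m b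
    show "lab E1 m b = lab E2 m b"
    proof (cases "m < j")
      case True
      have "lab (dsrc E1) m b = lab (dsrc E2) m b" using ds True by simp
      then show ?thesis using True d1 d2 by simp
    next
      case False
      show ?thesis
      proof (cases "m = j \<and> 1 \<le> b \<and> b \<le> len E1 j")
        case True then show ?thesis using top by auto
      next
        case F2: False
        then have "\<not> (m \<le> dim E1 \<and> 1 \<le> b \<and> b \<le> len E1 m)"
             "\<not> (m \<le> dim E2 \<and> 1 \<le> b \<and> b \<le> len E2 m)"
          using False d1 d2 L by auto
        then show ?thesis using c1 c2 unfolding canonical_def by metis
      qed
    qed
  qed
  show "ldiag.more E1 = ldiag.more E2" by simp
qed

lemma TD_simps[simp]:
  "cells (TD X) k = {D. lwf X k D}" "src (TD X) k E = dsrc E" "tgt (TD X) k E = dtgt X E"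
  by (simp_all add: TD_def)

lemma labelling_okD:
  assumes "labelling_ok X D" "1 \<le> m" "m \<le> dim D" "1 \<le> i" "i \<le> len D m"
    and "P = {j\<in>{1..<i}. vmap D m j = vmap D m i}"
  shows "src X m (lab D m i) = (if P = {} then lab D (m - 1) (vmap D m i)
           else tgt X m (lab D m (Max P)))"
  using assms(1-5) unfolding labelling_ok_def Let_def assms(6) by auto

lemma labelling_okC:
  assumes "labelling_ok X D" "m \<le> dim D" "1 \<le> i" "i \<le> len D m"
  shows "lab D m i \<in> cells X m"
  using assms unfolding labelling_ok_def by auto

lemma diag_okD:
  assumes "diag_ok D" "1 \<le> m" "m \<le> dim D" "1 \<le> i" "i \<le> len D m"
  shows "1 \<le> vmap D m i" "vmap D m i \<le> len D (m - 1)"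
  using assms unfolding diag_ok_def by auto

lemma labelling_okI:
  assumes "\<And>m a. m \<le> dim E \<Longrightarrow> 1 \<le> a \<Longrightarrow> a \<le> len E m \<Longrightarrow> lab E m a \<in> cells X m"
    and "\<And>m a P. 1 \<le> m \<Longrightarrow> m \<le> dim E \<Longrightarrow> 1 \<le> a \<Longrightarrow> a \<le> len E m \<Longrightarrow>
       P = {b\<in>{1..<a}. vmap E m b = vmap E m a} \<Longrightarrow>
       src X m (lab E m a) = (if P = {} then lab E (m - 1) (vmap E m a) else tgt X m (lab E m (Max P)))"
  shows "labelling_ok X E"
  unfolding labelling_ok_def Let_def
proof (intro conjI ballI allI impI)
  fix m a assume "m \<le> dim E" "a \<in> {1..len E m}"
  then show "lab E m a \<in> cells X m" using assms(1) by auto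
next
  fix m a assume "m \<in> {1..dim E}" "a \<in> {1..len E m}"
  then show "if {j \<in> {1..<a}. vmap E m j = vmap E m a} = {}
       then src X m (lab E m a) = lab E (m - 1) (vmap E m a)
       else src X m (lab E m a) = tgt X m (lab E m (Max {j \<in> {1..<a}. vmap E m j = vmap E m a}))"
    using assms(2)[of m a "{j \<in> {1..<a}. vmap E m j = vmap E m a}"] by auto
qed

lemma TDTD_eq:
  assumes w1: "lwf (TD X) k Y1" and w2: "lwf (TD X) k Y2"
    and le: "len Y1 = len Y2" and ve: "vmap Y1 = vmap Y2"
    and top: "\<And>m a. m \<le> k \<Longrightarrow> 1 \<le> a \<Longrightarrow> a \<le> len Y1 m \<Longrightarrow>
        len (lab Y1 m a) m = len (lab Y2 m a) m \<and>
        (\<forall>b\<in>{1..len (lab Y1 m a) m}. (0 < m \<longrightarrow> vmap (lab Y1 m a) m b = vmap (lab Y2 m a) m b)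
            \<and> lab (lab Y1 m a) m b = lab (lab Y2 m a) m b)"
  shows "Y1 = Y2"
proof -
  have d1: "dim Y1 = k" and c1: "canonical Y1" and dg1: "diag_ok Y1" and l1: "labelling_ok (TD X) Y1"
    using w1 by (auto simp: lwf_def diag_ok_def)
  have d2: "dim Y2 = k" and c2: "canonical Y2" and l2: "labelling_ok (TD X) Y2"
    using w2 by (auto simp: lwf_def diag_ok_def)
  have labeq: "\<forall>a. 1 \<le> a \<and> a \<le> len Y1 m \<longrightarrow> lab Y1 m a = lab Y2 m a" if "m \<le> k" for m
    using that
  proof (induction m)
    case 0
    show ?case
    proof (intro allI impI)
      fix a assume a: "1 \<le> a \<and> a \<le> len Y1 0"
      have "lab Y1 0 a \<in> cells (TD X) 0" "lab Y2 0 a \<in> cells (TD X) 0"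
        using labelling_okC[OF l1, of 0 a] labelling_okC[OF l2, of 0 a] a le d1 d2 by auto
      then have "lwf X 0 (lab Y1 0 a)" "lwf X 0 (lab Y2 0 a)" by auto
      then have cc: "canonical (lab Y1 0 a)" "canonical (lab Y2 0 a)" "dim (lab Y1 0 a) = 0" "dim (lab Y2 0 a) = 0"
        unfolding lwf_def diag_ok_def by auto
      have tp: "len (lab Y1 0 a) 0 = len (lab Y2 0 a) 0 \<and>
        (\<forall>b\<in>{1..len (lab Y1 0 a) 0}. (0 < (0::nat) \<longrightarrow> vmap (lab Y1 0 a) 0 b = vmap (lab Y2 0 a) 0 b)
            \<and> lab (lab Y1 0 a) 0 b = lab (lab Y2 0 a) 0 b)"
        using top[of 0 a] a by simp
      show "lab Y1 0 a = lab Y2 0 a"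
        by (rule ldiag_ext[OF cc]) (use tp in auto)
    qed
  next
    case (Suc m)
    have IH: "\<And>a. 1 \<le> a \<Longrightarrow> a \<le> len Y1 m \<Longrightarrow> lab Y1 m a = lab Y2 m a" using Suc by auto
    show ?case
    proof (intro allI impI)
      fix a assume a: "1 \<le> a \<and> a \<le> len Y1 (Suc m)"
      then show "lab Y1 (Suc m) a = lab Y2 (Suc m) a"
      proof (induction a rule: less_induct)
        case (less a)
        have w1a: "lwf X (Suc m) (lab Y1 (Suc m) a)" and w2a: "lwf X (Suc m) (lab Y2 (Suc m) a)"
          using labelling_okC[OF l1, of "Suc m" a] labelling_okC[OF l2, of "Suc m" a] less.prems le Suc.prems d1 d2 by auto
        define P where "P = {j\<in>{1..<a}. vmap Y1 (Suc m) j = vmap Y1 (Suc m) a}"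
        have P2: "P = {j\<in>{1..<a}. vmap Y2 (Suc m) j = vmap Y2 (Suc m) a}" using ve P_def by simp
        have rng: "Suc m \<in> {1..dim Y1}" "a \<in> {1..len Y1 (Suc m)}" using Suc.prems d1 less.prems by auto
        have rng2: "Suc m \<in> {1..dim Y2}" "a \<in> {1..len Y2 (Suc m)}" using rng d1 d2 le by auto
        have s1: "dsrc (lab Y1 (Suc m) a) = (if P = {} then lab Y1 m (vmap Y1 (Suc m) a) else dtgt X (lab Y1 (Suc m) (Max P)))"
          using labelling_okD[OF l1, of "Suc m" a P, OF _ _ _ _ P_def] rng unfolding TD_simps by simp
        have s2: "dsrc (lab Y2 (Suc m) a) = (if P = {} then lab Y2 m (vmap Y2 (Suc m) a) else dtgt X (lab Y2 (Suc m) (Max P)))"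
          using labelling_okD[OF l2, of "Suc m" a P, OF _ _ _ _ P2] rng2 unfolding TD_simps by simp
        have "dsrc (lab Y1 (Suc m) a) = dsrc (lab Y2 (Suc m) a)"
        proof (cases "P = {}")
          case True
          have "vmap Y1 (Suc m) a \<in> {1..len Y1 m}" using diag_okD[OF dg1, of "Suc m" a] rng by auto
          then show ?thesis using s1 s2 True IH ve by auto
        next
          case False
          have fin: "finite P" unfolding P_def by auto
          have "Max P \<in> P" using fin False by simp
          then have mp: "1 \<le> Max P" "Max P < a" unfolding P_def by auto
          then have "lab Y1 (Suc m) (Max P) = lab Y2 (Suc m) (Max P)"
            using less.IH[of "Max P"] less.prems by auto
          then show ?thesis using s1 s2 False by simp
        qed
        moreover have cc: "canonical (lab Y1 (Suc m) a)" "canonical (lab Y2 (Suc m) a)"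
           "dim (lab Y1 (Suc m) a) = Suc m" "dim (lab Y2 (Suc m) a) = Suc m"
          using w1a w2a unfolding lwf_def diag_ok_def by auto
        moreover have tp: "len (lab Y1 (Suc m) a) (Suc m) = len (lab Y2 (Suc m) a) (Suc m) \<and>
        (\<forall>b\<in>{1..len (lab Y1 (Suc m) a) (Suc m)}. (0 < Suc m \<longrightarrow> vmap (lab Y1 (Suc m) a) (Suc m) b = vmap (lab Y2 (Suc m) a) (Suc m) b)
            \<and> lab (lab Y1 (Suc m) a) (Suc m) b = lab (lab Y2 (Suc m) a) (Suc m) b)"
          using top[of "Suc m" a] less.prems Suc.prems by simp
        ultimately show ?case
          by (intro ldiag_ext[OF cc]) (use tp in auto)
      qed
    qed
  qed
  show ?thesis
  proof (rule ldiag.equality)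
    show "dim Y1 = dim Y2" using d1 d2 by simp
    show "len Y1 = len Y2" "vmap Y1 = vmap Y2" by fact+
    show "lab Y1 = lab Y2"
    proof (intro ext)
      fix m a
      show "lab Y1 m a = lab Y2 m a"
      proof (cases "m \<le> k \<and> 1 \<le> a \<and> a \<le> len Y1 m")
        case True then show ?thesis using labeq by auto
      next
        case False
        then show ?thesis using c1 c2 d1 d2 le unfolding canonical_def by metis
      qed
    qed
    show "ldiag.more Y1 = ldiag.more Y2" by simp
  qed
qed




locale mt6 =
  fixes X :: "'a gset" and n k :: nat and D :: "'a ldiag"
  assumes glob: "globular n X" and kn: "k \<le> n" and Dwf: "lwf X k D"
    and ntD: "nontrivial D" and nbD: "\<not> is_block D"
begin

definition "S = {j. 1 < len D j}"
definition "M = Mlev D"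
definition "L = len D M"
definition "v = vmap D M"
definition "p = vmap D (Suc M) 1"

lemma dimD: "dim D = k" and canD: "canonical D" and dgD: "diag_ok D" and lbD: "labelling_ok X D"
  using Dwf unfolding lwf_def diag_ok_def by auto

lemma canD': "len D 0 = 1" "\<And>m. k < m \<Longrightarrow> len D m = 0"
  "\<And>m i. \<not> (1 \<le> m \<and> m \<le> k \<and> 1 \<le> i \<and> i \<le> len D m) \<Longrightarrow> vmap D m i = 0"
  "\<And>m i. \<not> (m \<le> k \<and> 1 \<le> i \<and> i \<le> len D m) \<Longrightarrow> lab D m i = undefined"
  using canD dimD unfolding canonical_def by auto

lemma S_sub: "S \<subseteq> {1..k}"
proof
  fix j assume "j \<in> S"
  then have "1 < len D j" by (simp add: S_def)
  then show "j \<in> {1..k}" using canD'(1) canD'(2)[of j] by (cases "j = 0"; cases "k < j") auto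
qed

lemma finS: "finite S" using S_sub finite_subset by blast

lemma S_ne: "S \<noteq> {}" using ntD unfolding nontrivial_def S_def by auto

lemma nondegD: "1 \<le> j \<Longrightarrow> j \<le> k \<Longrightarrow> 1 \<le> len D j"
proof -
  assume a: "1 \<le> j" "j \<le> k"
  have "\<forall>i\<in>{1..dim D}. 0 < len D i" using ntD unfolding nontrivial_def nondegenerate_def by simp
  then show ?thesis using a dimD by force
qed

lemma M_max: "M = Max S" unfolding M_def Mlev_def S_def by simp

lemma M_in: "M \<in> S" using M_max finS S_ne by simp

lemma M_le: "1 \<le> M" "M \<le> k" using M_in S_sub by auto

lemma above: "M < j \<Longrightarrow> len D j \<le> 1"
  using Max_ge[OF finS, of j] M_max unfolding S_def by force

lemma above1: "M < j \<Longrightarrow> j \<le> k \<Longrightarrow> len D j = 1"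
  using above nondegD[of j] M_le by force

lemma minlt: "Min S < M"
proof -
  have "Min S \<le> Max S" using finS S_ne by simp
  moreover have "Min S \<noteq> Max S" using nbD ntD unfolding is_block_def mlev_def Mlev_def S_def by simp
  ultimately show ?thesis using M_max by simp
qed

lemma Min_in: "Min S \<in> S" using finS S_ne by simp

lemma M2: "2 \<le> M" using minlt Min_in S_sub by force

lemma L2: "2 \<le> L" using M_in unfolding L_def S_def by simp

lemma v_rng: "1 \<le> i \<Longrightarrow> i \<le> L \<Longrightarrow> 1 \<le> v i \<and> v i \<le> len D (M - 1)"
  using diag_okD[OF dgD, of M i] M_le dimD unfolding v_def L_def by auto

lemma p_rng: "M < k \<Longrightarrow> 1 \<le> p \<and> p \<le> L"
  using diag_okD[OF dgD, of "Suc M" 1] M_le dimD above1[of "Suc M"] unfolding p_def L_def by auto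

lemma xcells: "1 \<le> i \<Longrightarrow> i \<le> L \<Longrightarrow> lab D M i \<in> cells X M"
  using labelling_okC[OF lbD, of M i] M_le dimD unfolding L_def by auto

lemma Dcells: "m \<le> k \<Longrightarrow> 1 \<le> i \<Longrightarrow> i \<le> len D m \<Longrightarrow> lab D m i \<in> cells X m"
  using labelling_okC[OF lbD, of m i] dimD by auto

lemma gl: assumes "x \<in> cells X M"
  shows "tgt X M x \<in> cells X (M - 1)"
    "src X (M - 1) (tgt X M x) = src X (M - 1) (src X M x)"
    "tgt X (M - 1) (tgt X M x) = tgt X (M - 1) (src X M x)"
proof -
  have r: "M \<in> {1..n}" "M \<in> {2..n}" using M2 M_le kn by auto
  show "tgt X M x \<in> cells X (M - 1)" using glob r assms unfolding globular_def by blast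
  have "src X (M - 1) (src X M x) = src X (M - 1) (tgt X M x) \<and>
        tgt X (M - 1) (src X M x) = tgt X (M - 1) (tgt X M x)"
    using glob r(2) assms unfolding globular_def by blast
  then show "src X (M - 1) (tgt X M x) = src X (M - 1) (src X M x)"
    "tgt X (M - 1) (tgt X M x) = tgt X (M - 1) (src X M x)" by simp_all
qed

definition "run i q = (if \<exists>j\<in>{1..<i}. v j = q then tgt X M (lab D M (Max {j\<in>{1..<i}. v j = q}))
   else lab D (M - 1) q)"

lemma run1: "run (Suc 0) q = lab D (M - 1) q" unfolding run_def by auto

lemma run_Suc: assumes "1 \<le> i"
  shows "run (Suc i) q = (if v i = q then tgt X M (lab D M i) else run i q)"
proof (cases "v i = q")
  case True
  have "Max {j\<in>{1..<Suc i}. v j = q} = i" 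
    by (rule Max_eqI) (use True assms in auto)
  then show ?thesis unfolding run_def using True assms by auto
next
  case False
  have "{j\<in>{1..<Suc i}. v j = q} = {j\<in>{1..<i}. v j = q}" using False assms by (auto simp: less_Suc_eq)
  then show ?thesis unfolding run_def using False by (auto simp: less_Suc_eq)
qed

lemma src_x: assumes "1 \<le> i" "i \<le> L" shows "src X M (lab D M i) = run i (v i)"
proof -
  define P where "P = {j\<in>{1..<i}. vmap D M j = vmap D M i}"
  have "src X M (lab D M i) = (if P = {} then lab D (M - 1) (vmap D M i) else tgt X M (lab D M (Max P)))"
    by (rule labelling_okD[OF lbD _ _ _ _ P_def]) (use assms M_le dimD in \<open>auto simp: L_def\<close>)
  moreover have "P = {j\<in>{1..<i}. v j = v i}" unfolding P_def v_def by simp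
  ultimately show ?thesis unfolding run_def by (auto simp: v_def)
qed

lemma run_inv: "1 \<le> i \<Longrightarrow> i \<le> L \<Longrightarrow> 1 \<le> q \<Longrightarrow> q \<le> len D (M - 1) \<Longrightarrow>
   run i q \<in> cells X (M - 1) \<and> src X (M - 1) (run i q) = src X (M - 1) (lab D (M - 1) q)
   \<and> tgt X (M - 1) (run i q) = tgt X (M - 1) (lab D (M - 1) q)"
proof (induction i)
  case 0 then show ?case by simp
next
  case (Suc i)
  show ?case
  proof (cases "i = 0")
    case True
    then show ?thesis using run1 Dcells[of "M - 1" q] Suc.prems M_le by auto
  next
    case False
    then have i1: "1 \<le> i" by simp
    have IH: "run i q \<in> cells X (M - 1) \<and> src X (M - 1) (run i q) = src X (M - 1) (lab D (M - 1) q)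
      \<and> tgt X (M - 1) (run i q) = tgt X (M - 1) (lab D (M - 1) q)" using Suc i1 by auto
    show ?thesis
    proof (cases "v i = q")
      case True
      have xc: "lab D M i \<in> cells X M" using xcells[of i] i1 Suc.prems by auto
      have sx: "src X M (lab D M i) = run i q" using src_x[of i] i1 Suc.prems True by auto
      show ?thesis using run_Suc[OF i1, of q] True gl[OF xc] sx IH by simp
    next
      case False
      then show ?thesis using run_Suc[OF i1, of q] IH by simp
    qed
  qed
qed

lemma run_out: assumes "i \<le> Suc L" "\<not> (1 \<le> q \<and> q \<le> len D (M - 1))"
  shows "run i q = lab D (M - 1) q"
proof -
  have "\<not> (\<exists>j\<in>{1..<i}. v j = q)" using v_rng assms by force
  then show ?thesis unfolding run_def by simp
qed

end



context mt6 begin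

definition G :: "nat \<Rightarrow> nat \<Rightarrow> 'a ldiag" where
 "G i j = \<lparr>dim = j,
   len = \<lambda>m. if m \<le> j then (if m = M then 1 else len D m) else 0,
   vmap = \<lambda>m a. if m \<le> j then (if m = M then (if a = 1 then v i else 0)
        else if m = Suc M then (if a = 1 then 1 else 0) else vmap D m a) else 0,
   lab = \<lambda>m a. if m \<le> j then (if m = M - 1 then run i a
        else if m = M then (if a = 1 then lab D M i else undefined) else lab D m a) else undefined\<rparr>"

lemma G_simps[simp]:
  "dim (G i j) = j"
  "len (G i j) m = (if m \<le> j then (if m = M then 1 else len D m) else 0)"
  "vmap (G i j) m a = (if m \<le> j then (if m = M then (if a = 1 then v i else 0)
        else if m = Suc M then (if a = 1 then 1 else 0) else vmap D m a) else 0)"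
  "lab (G i j) m a = (if m \<le> j then (if m = M - 1 then run i a
        else if m = M then (if a = 1 then lab D M i else undefined) else lab D m a) else undefined)"
  by (simp_all add: G_def)

lemma dsrc_G: "1 \<le> j \<Longrightarrow> dsrc (G i j) = G i (j - 1)"
  by (rule ldiag.equality) (auto simp: fun_eq_iff)

lemma M1: "M - 1 \<noteq> M" "M - 1 < M" "Suc (M - 1) = M" using M_le by auto

lemma dtgt_G: assumes "1 \<le> i" shows "dtgt X (G i M) = G (Suc i) (M - 1)"
proof -
  have img: "vmap (G i M) M ` {1..len (G i M) M} = {v i}" by simp
  have mx: "Max {j\<in>{1..len (G i M) M}. vmap (G i M) M j = v i} = 1"
    by (rule Max_eqI) auto
  have lab1: "lab (G i M) M 1 = lab D M i" using M1 by simp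
  show ?thesis
  proof (rule ldiag.equality)
    show "dim (dtgt X (G i M)) = dim (G (Suc i) (M - 1))" by (simp add: dtgt_def)
    show "len (dtgt X (G i M)) = len (G (Suc i) (M - 1))"
      using M1 by (auto simp: dtgt_def fun_eq_iff)
    show "vmap (dtgt X (G i M)) = vmap (G (Suc i) (M - 1))"
      using M1 by (auto simp: dtgt_def fun_eq_iff)
    show "lab (dtgt X (G i M)) = lab (G (Suc i) (M - 1))"
    proof (intro ext)
      fix m q
      show "lab (dtgt X (G i M)) m q = lab (G (Suc i) (M - 1)) m q"
      proof (cases "m = M - 1")
        case True
        have "lab (dtgt X (G i M)) m q = (if q = v i then tgt X M (lab D M i) else run i q)"
          unfolding dtgt_def using True img mx lab1 M1 by simp
        also have "\<dots> = lab (G (Suc i) (M - 1)) m q"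
          using True run_Suc[OF assms, of q] by auto
        finally show ?thesis .
      next
        case False
        then show ?thesis using M1 unfolding dtgt_def by auto
      qed
    qed
    show "ldiag.more (dtgt X (G i M)) = ldiag.more (G (Suc i) (M - 1))" by (simp add: dtgt_def G_def)
  qed
qed

lemma G_canonical: assumes "1 \<le> i" "i \<le> L" "j \<le> k" shows "canonical (G i j)"
  unfolding canonical_def
proof (intro conjI allI impI)
  show "len (G i j) 0 = 1" using M2 canD' by simp
next
  fix m assume "dim (G i j) < m" then show "len (G i j) m = 0" by simp
next
  fix m a assume h: "\<not> (1 \<le> m \<and> m \<le> dim (G i j) \<and> 1 \<le> a \<and> a \<le> len (G i j) m)"
  show "vmap (G i j) m a = 0"
  proof (cases "m \<le> j")
    case False then show ?thesis by simp
  next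
    case True
    show ?thesis
    proof (cases "m = M")
      case True then show ?thesis using h \<open>m \<le> j\<close> M_le by auto
    next
      case F1: False
      show ?thesis
      proof (cases "m = Suc M")
        case True then show ?thesis using h \<open>m \<le> j\<close> above1[of m] assms by auto
      next
        case False
        then show ?thesis using h \<open>m \<le> j\<close> F1 canD'(3)[of m a] assms by auto
      qed
    qed
  qed
next
  fix m a assume h: "\<not> (m \<le> dim (G i j) \<and> 1 \<le> a \<and> a \<le> len (G i j) m)"
  show "lab (G i j) m a = undefined"
  proof (cases "m \<le> j")
    case False then show ?thesis by simp
  next
    case True
    show ?thesis
    proof (cases "m = M - 1")
      case True
      then have "\<not> (1 \<le> a \<and> a \<le> len D (M - 1))" using h \<open>m \<le> j\<close> M1 by auto
      then show ?thesis using True \<open>m \<le> j\<close> run_out[of i a] assms canD'(4)[of "M - 1" a] by auto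
    next
      case F1: False
      show ?thesis
      proof (cases "m = M")
        case True then show ?thesis using h \<open>m \<le> j\<close> F1 by auto
      next
        case False
        then show ?thesis using h \<open>m \<le> j\<close> F1 canD'(4)[of m a] assms by auto
      qed
    qed
  qed
qed

lemma G_diag: assumes "1 \<le> i" "i \<le> L" "j \<le> k" shows "diag_ok (G i j)"
  unfolding diag_ok_def
proof (intro conjI ballI)
  show "canonical (G i j)" using G_canonical assms .
next
  fix m a assume m: "m \<in> {1..dim (G i j)}" and a: "a \<in> {1..len (G i j) m}"
  show "vmap (G i j) m a \<in> {1..len (G i j) (m - 1)}"
  proof (cases "m = M")
    case True
    then show ?thesis using m a v_rng[of i] assms M1 by auto
  next
    case F1: False
    show ?thesis
    proof (cases "m = Suc M")
      case True then show ?thesis using m a above1[of m] assms by auto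
    next
      case False
      have "1 \<le> vmap D m a" "vmap D m a \<le> len D (m - 1)" using diag_okD[OF dgD, of m a] m a F1 assms dimD by auto
      moreover have "m - 1 \<noteq> M" using False m by auto
      ultimately show ?thesis using m a F1 False by auto
    qed
  qed
qed

lemma G_lab: assumes "1 \<le> i" "i \<le> L" "j \<le> k" "j \<le> M \<or> i = p" shows "labelling_ok X (G i j)"
proof (rule labelling_okI)
  fix m a assume m: "m \<le> dim (G i j)" and a: "1 \<le> a" "a \<le> len (G i j) m"
  show "lab (G i j) m a \<in> cells X m"
  proof (cases "m = M - 1")
    case True
    then show ?thesis using run_inv[of i a] m a assms M1 by auto
  next
    case F1: False
    show ?thesis
    proof (cases "m = M")
      case True then show ?thesis using xcells[of i] m a assms F1 by auto
    next
      case False then show ?thesis using Dcells[of m a] m a assms F1 by auto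
    qed
  qed
next
  fix m a P assume m: "1 \<le> m" "m \<le> dim (G i j)" and a: "1 \<le> a" "a \<le> len (G i j) m"
    and P: "P = {b \<in> {1..<a}. vmap (G i j) m b = vmap (G i j) m a}"
  have mj: "m \<le> j" using m by simp
  show "src X m (lab (G i j) m a) = (if P = {} then lab (G i j) (m - 1) (vmap (G i j) m a)
        else tgt X m (lab (G i j) m (Max P)))"
  proof (cases "m = M")
    case True
    then have "a = 1" using a mj by auto
    then have "P = {}" using P by auto
    then show ?thesis using True \<open>a = 1\<close> mj M1 src_x[of i] assms by auto
  next
    case F1: False
    show ?thesis
    proof (cases "m = Suc M")
      case True
      then have a1: "a = 1" using a mj above1[of m] assms by auto
      then have "P = {}" using P by auto
      have ip: "i = p" using assms True mj by auto
      define PD where "PD = {b \<in> {1..<a}. vmap D m b = vmap D m a}"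
      have "PD = {}" using a1 PD_def by auto
      have "src X m (lab D m a) = (if PD = {} then lab D (m - 1) (vmap D m a) else tgt X m (lab D m (Max PD)))"
        by (rule labelling_okD[OF lbD _ _ _ _ PD_def]) (use m a mj assms dimD True F1 in auto)
      then have "src X m (lab D m a) = lab D M p" using \<open>PD = {}\<close> True a1 by (simp add: p_def)
      then show ?thesis using \<open>P = {}\<close> True a1 mj ip M1 by auto
    next
      case F2: False
      have vm: "vmap (G i j) m b = vmap D m b" for b using F1 F2 mj by simp
      have ln: "len (G i j) m = len D m" using F1 mj by simp
      define PD where "PD = {b \<in> {1..<a}. vmap D m b = vmap D m a}"
      have PP: "P = PD" using P vm PD_def by simp
      have cD: "src X m (lab D m a) = (if PD = {} then lab D (m - 1) (vmap D m a) else tgt X m (lab D m (Max PD)))"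
        by (rule labelling_okD[OF lbD _ _ _ _ PD_def]) (use m a mj assms dimD ln in auto)
      have mxP: "PD \<noteq> {} \<Longrightarrow> 1 \<le> Max PD \<and> Max PD \<le> len D m"
      proof -
        assume "PD \<noteq> {}"
        then have "Max PD \<in> PD" unfolding PD_def by (intro Max_in) auto
        then show ?thesis using a ln unfolding PD_def by auto
      qed
      show ?thesis
      proof (cases "m = M - 1")
        case True
        have l1: "lab (G i j) m c = run i c" for c using True mj by simp
        have e: "m - 1 \<noteq> M - 1" "m - 1 \<noteq> M" "m - 1 \<le> j" using True mj M2 by auto
        have l0: "lab (G i j) (m - 1) c = lab D (m - 1) c" for c using e by simp
        have ri: "src X (M - 1) (run i a) = src X (M - 1) (lab D (M - 1) a)"
          using run_inv[of i a] assms a ln True by auto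
        have rt: "PD \<noteq> {} \<Longrightarrow> tgt X (M - 1) (run i (Max PD)) = tgt X (M - 1) (lab D (M - 1) (Max PD))"
          using run_inv[of i "Max PD"] assms mxP True by auto
        show ?thesis unfolding PP l1 l0 vm using cD ri rt True by auto
      next
        case False
        have l1: "lab (G i j) m c = lab D m c" for c using False F1 mj by simp
        have l0: "lab (G i j) (m - 1) c = lab D (m - 1) c" for c using False F1 F2 mj m by auto
        show ?thesis unfolding PP l1 l0 vm using cD by simp
      qed
    qed
  qed
qed

lemma G_lwf: assumes "1 \<le> i" "i \<le> L" "j \<le> k" "j \<le> M \<or> i = p" shows "lwf X j (G i j)"
  unfolding lwf_def using G_diag[OF assms(1-3)] G_lab[OF assms] by simp

end



context mt6 begin

definition "idx m a = (if m = M then a else if M < m then p else 1)"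
definition "lenY m = (if m \<le> k then (if m = M then L else 1) else 0)"

definition Y :: "'a ldiag ldiag" where
 "Y = \<lparr>dim = k, len = lenY,
   vmap = \<lambda>m a. if 1 \<le> m \<and> m \<le> k \<and> 1 \<le> a \<and> a \<le> lenY m then (if m = Suc M then p else 1) else 0,
   lab = \<lambda>m a. if m \<le> k \<and> 1 \<le> a \<and> a \<le> lenY m then G (idx m a) m else undefined\<rparr>"

lemma Y_simps[simp]: "dim Y = k" "len Y = lenY"
  "vmap Y m a = (if 1 \<le> m \<and> m \<le> k \<and> 1 \<le> a \<and> a \<le> lenY m then (if m = Suc M then p else 1) else 0)"
  "lab Y m a = (if m \<le> k \<and> 1 \<le> a \<and> a \<le> lenY m then G (idx m a) m else undefined)"
  by (simp_all add: Y_def)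

lemma idx_rng: assumes "m \<le> k" "1 \<le> a" "a \<le> lenY m"
  shows "1 \<le> idx m a \<and> idx m a \<le> L \<and> (m \<le> M \<or> idx m a = p)"
proof -
  have "M < m \<Longrightarrow> 1 \<le> p \<and> p \<le> L" using p_rng assms by auto
  then show ?thesis using assms L2 unfolding idx_def lenY_def by (auto split: if_splits)
qed

lemma Y_lwf: "lwf (TD X) k Y"
proof -
  have can: "canonical Y" unfolding canonical_def using M2 by (auto simp: lenY_def)
  have dg: "diag_ok Y" unfolding diag_ok_def
  proof (intro conjI ballI)
    fix m a assume m: "m \<in> {1..dim Y}" and a: "a \<in> {1..len Y m}"
    show "vmap Y m a \<in> {1..len Y (m - 1)}"
    proof (cases "m = Suc M")
      case True
      then show ?thesis using m a p_rng by (auto simp: lenY_def)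
    next
      case False
      then show ?thesis using m a L2 by (auto simp: lenY_def)
    qed
  qed (rule can)
  have lb: "labelling_ok (TD X) Y"
  proof (rule labelling_okI)
    fix m a assume "m \<le> dim Y" "1 \<le> a" "a \<le> len Y m"
    then show "lab Y m a \<in> cells (TD X) m" using idx_rng[of m a] G_lwf by auto
  next
    fix m a P assume m: "1 \<le> m" "m \<le> dim Y" and a: "1 \<le> a" "a \<le> len Y m"
      and P: "P = {b \<in> {1..<a}. vmap Y m b = vmap Y m a}"
    have lY: "lab Y m a = G (idx m a) m" using m a by simp
    have sY: "src (TD X) m (lab Y m a) = G (idx m a) (m - 1)" using lY dsrc_G m by simp
    show "src (TD X) m (lab Y m a) = (if P = {} then lab Y (m - 1) (vmap Y m a) else tgt (TD X) m (lab Y m (Max P)))"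
    proof (cases "m = M")
      case True
      have PP: "P = {1..<a}" using P True m a M_le by (auto simp: lenY_def)
      show ?thesis
      proof (cases "a = 1")
        case True
        then show ?thesis using PP sY \<open>m = M\<close> m M1 M_le L2 by (simp add: idx_def lenY_def)
      next
        case False
        then have "P \<noteq> {}" using PP a by auto
        have "Max P = a - 1" unfolding PP by (rule Max_eqI) (use False a in auto)
        moreover have "lab Y m (a - 1) = G (a - 1) M" using \<open>m = M\<close> m a False by (auto simp: idx_def lenY_def)
        moreover have "dtgt X (G (a - 1) M) = G a (M - 1)" using dtgt_G[of "a - 1"] False a by simp
        ultimately show ?thesis using sY \<open>m = M\<close> \<open>P \<noteq> {}\<close> by (simp add: idx_def)
      qed
    next
      case F1: False
      then have a1: "a = 1" using a m by (simp add: lenY_def)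
      then have "P = {}" using P by auto
      show ?thesis
      proof (cases "m = Suc M")
        case True
        have pr: "1 \<le> p \<and> p \<le> L" using p_rng True m by simp
        have "lab Y (m - 1) (vmap Y m a) = G p M" using True a1 m pr M_le by (simp add: idx_def lenY_def)
        then show ?thesis using \<open>P = {}\<close> sY True by (simp add: idx_def)
      next
        case False
        have "lab Y (m - 1) (vmap Y m a) = G (idx m a) (m - 1)" using False F1 a1 m 
          by (auto simp: idx_def lenY_def)
        then show ?thesis using \<open>P = {}\<close> sY by simp
      qed
    qed
  qed
  show ?thesis unfolding lwf_def using dg lb by (simp add: diag_ok_def)
qed

end



context mt6 begin

definition shaped :: "'a ldiag ldiag \<Rightarrow> bool" where
  "shaped y \<longleftrightarrow> dim y = k \<and> len y = lenY \<and>
    (\<forall>m a. 1 \<le> m \<and> m \<le> k \<and> 1 \<le> a \<and> a \<le> lenY m \<and> m \<noteq> Suc M \<longrightarrow> vmap y m a = 1) \<and>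
    (M < k \<longrightarrow> 1 \<le> vmap y (Suc M) 1 \<and> vmap y (Suc M) 1 \<le> L) \<and>
    (\<forall>m\<le>k. m \<noteq> M \<longrightarrow> len (lab y m 1) m = len D m) \<and>
    (\<forall>a\<in>{1..L}. len (lab y M a) M = 1)"

lemma off1: "off y m (Suc 0) = 0" by (simp add: off_def)

lemma off2: "off y m 2 = len (lab y m 1) m" by (simp add: off_def numeral_2_eq_2)

lemma offM: assumes "shaped y" "c \<le> Suc L" shows "off y M c = c - 1"
proof -
  have "off y M c = (\<Sum>i\<in>{1..<c}. (1::nat))" unfolding off_def
    by (rule sum.cong) (use assms in \<open>auto simp: shaped_def\<close>)
  then show ?thesis by simp
qed

lemma off_top: assumes "shaped y" "m \<le> k" shows "off y m (Suc (len y m)) = len D m"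
proof (cases "m = M")
  case True
  then show ?thesis using offM[OF assms(1), of "Suc L"] assms by (simp add: shaped_def lenY_def L_def)
next
  case False
  then have "len y m = 1" using assms by (simp add: shaped_def lenY_def)
  then show ?thesis using off2[of y m] assms False by (simp add: shaped_def numeral_2_eq_2)
qed

lemma comp_sh: assumes "shaped y" "m \<le> k" "1 \<le> g" "g \<le> len D m"
  shows "comp y m g = (if m = M then g else 1)"
proof (cases "m = M")
  case True
  have gL: "g \<le> L" using assms True by (simp add: L_def)
  have "comp y m g = g" unfolding comp_def
  proof (rule Least_equality)
    show "g \<le> off y m (Suc g)" using offM[OF assms(1), of "Suc g"] True gL by simp
  next
    fix i assume "g \<le> off y m (Suc i)"
    show "g \<le> i"
    proof (rule ccontr)
      assume "\<not> g \<le> i"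
      then have "off y m (Suc i) = i" using offM[OF assms(1), of "Suc i"] True gL by simp
      then show False using \<open>g \<le> off y m (Suc i)\<close> \<open>\<not> g \<le> i\<close> by simp
    qed
  qed
  then show ?thesis using True by simp
next
  case False
  have "comp y m g = 1" unfolding comp_def
  proof (rule Least_equality)
    show "g \<le> off y m (Suc 1)" using off2[of y m] assms False by (simp add: shaped_def numeral_2_eq_2)
  next
    fix i assume "g \<le> off y m (Suc i)"
    then show "1 \<le> i" using off1[of y m] assms by (cases i) auto
  qed
  then show ?thesis using False by simp
qed

lemma inner_sh: assumes "shaped y" "m \<le> k" "1 \<le> g" "g \<le> len D m"
  shows "inner y m g = (if m = M then 1 else g)"
proof (cases "m = M")
  case True
  then have "comp y m g = g" using comp_sh[OF assms] by simp
  moreover have "off y M g = g - 1" using offM[OF assms(1), of g] assms True by (simp add: L_def)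
  ultimately show ?thesis unfolding inner_def using True assms by simp
next
  case False
  then show ?thesis using comp_sh[OF assms] off1[of y m] unfolding inner_def by simp
qed

lemma len_mu: assumes "shaped y" shows "len (mu y) = len D"
proof
  fix m
  show "len (mu y) m = len D m"
  proof (cases "m \<le> k")
    case True then show ?thesis using off_top[OF assms True] assms by (simp add: mu_def shaped_def)
  next
    case False then show ?thesis using assms canD' by (simp add: mu_def shaped_def)
  qed
qed

lemma vmap_mu: assumes sh: "shaped y" and m: "1 \<le> m" "m \<le> k" and g: "1 \<le> g" "g \<le> len D m"
  shows "vmap (mu y) m g = (if m = Suc M then vmap y (Suc M) 1 - 1 else 0)
     + vmap (lab y m (if m = M then g else 1)) m (if m = M then 1 else g)"
proof -
  have dy: "dim y = k" using sh by (simp add: shaped_def)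
  have "vmap (mu y) m g = off y (m - 1) (vmap y m (comp y m g)) + vmap (lab y m (comp y m g)) m (inner y m g)"
    using off_top[OF sh m(2)] m g dy by (simp add: mu_def)
  also have "\<dots> = off y (m - 1) (vmap y m (if m = M then g else 1)) + vmap (lab y m (if m = M then g else 1)) m (if m = M then 1 else g)"
    using comp_sh[OF sh m(2) g] inner_sh[OF sh m(2) g] by simp
  also have "off y (m - 1) (vmap y m (if m = M then g else 1)) = (if m = Suc M then vmap y (Suc M) 1 - 1 else 0)"
  proof (cases "m = Suc M")
    case True
    have "M < k" using True m by simp
    then have "vmap y (Suc M) 1 \<le> Suc L" using sh by (simp add: shaped_def)
    then show ?thesis using True offM[OF sh, of "vmap y (Suc M) 1"] by simp
  next
    case False
    have "(if m = M then g else 1) \<le> lenY m" using m g False by (auto simp: lenY_def L_def)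
    then have "vmap y m (if m = M then g else 1) = 1" using sh m g False by (auto simp: shaped_def)
    then show ?thesis using False off1 by simp
  qed
  finally show ?thesis .
qed

lemma lab_mu: assumes sh: "shaped y" and m: "m \<le> k" and g: "1 \<le> g" "g \<le> len D m"
  shows "lab (mu y) m g = lab (lab y m (if m = M then g else 1)) m (if m = M then 1 else g)"
proof -
  have dy: "dim y = k" using sh by (simp add: shaped_def)
  have "lab (mu y) m g = lab (lab y m (comp y m g)) m (inner y m g)"
    using off_top[OF sh m] m g dy by (simp add: mu_def)
  then show ?thesis using comp_sh[OF sh m g] inner_sh[OF sh m g] by simp
qed

lemma mu_eqI: assumes sh: "shaped y"
  and V: "\<And>m g. 1 \<le> m \<Longrightarrow> m \<le> k \<Longrightarrow> 1 \<le> g \<Longrightarrow> g \<le> len D m \<Longrightarrow> vmap (mu y) m g = vmap D m g"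
  and La: "\<And>m g. m \<le> k \<Longrightarrow> 1 \<le> g \<Longrightarrow> g \<le> len D m \<Longrightarrow> lab (mu y) m g = lab D m g"
  shows "mu y = D"
proof -
  have dy: "dim y = k" using sh by (simp add: shaped_def)
  have lm: "len (mu y) = len D" by (rule len_mu[OF sh])
  have lm': "m \<le> k \<Longrightarrow> off y m (Suc (len y m)) = len D m" for m using off_top[OF sh] by simp
  show ?thesis
  proof (rule ldiag.equality)
    show "dim (mu y) = dim D" using dy dimD by (simp add: mu_def)
    show "len (mu y) = len D" by (rule lm)
    show "vmap (mu y) = vmap D"
    proof (intro ext)
      fix m g
      show "vmap (mu y) m g = vmap D m g"
      proof (cases "1 \<le> m \<and> m \<le> k \<and> 1 \<le> g \<and> g \<le> len D m")
        case True then show ?thesis using V by auto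
      next
        case False
        then show ?thesis using canD'(3)[of m g] lm' dy by (auto simp: mu_def)
      qed
    qed
    show "lab (mu y) = lab D"
    proof (intro ext)
      fix m g
      show "lab (mu y) m g = lab D m g"
      proof (cases "m \<le> k \<and> 1 \<le> g \<and> g \<le> len D m")
        case True then show ?thesis using La by auto
      next
        case False
        then show ?thesis using canD'(4)[of m g] lm' dy by (auto simp: mu_def)
      qed
    qed
    show "ldiag.more (mu y) = ldiag.more D" by (simp add: mu_def)
  qed
qed

end



context mt6 begin

lemma lenY_simps: "lenY M = L" "m \<le> k \<Longrightarrow> m \<noteq> M \<Longrightarrow> lenY m = 1" "k < m \<Longrightarrow> lenY m = 0"
  using M_le by (auto simp: lenY_def)

lemma Y_shaped: "shaped Y"
  unfolding shaped_def
proof (intro conjI allI impI ballI)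
  show "M < k \<Longrightarrow> 1 \<le> vmap Y (Suc M) 1" "M < k \<Longrightarrow> vmap Y (Suc M) 1 \<le> L"
    using p_rng lenY_simps(2)[of "Suc M"] by auto
next
  fix m assume "m \<le> k" "m \<noteq> M"
  then show "len (lab Y m 1) m = len D m" using lenY_simps(2)[of m] by simp
next
  fix a assume "a \<in> {1..L}"
  then show "len (lab Y M a) M = 1" using lenY_simps(1) M_le by (simp add: idx_def)
qed auto

lemma Y_mu: "mu Y = D"
proof (rule mu_eqI[OF Y_shaped])
  fix m g assume m: "1 \<le> m" "m \<le> k" and g: "1 \<le> g" "g \<le> len D m"
  have e: "vmap (mu Y) m g = (if m = Suc M then vmap Y (Suc M) 1 - 1 else 0)
     + vmap (lab Y m (if m = M then g else 1)) m (if m = M then 1 else g)"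
    by (rule vmap_mu[OF Y_shaped m g])
  show "vmap (mu Y) m g = vmap D m g"
  proof (cases "m = M")
    case True
    then show ?thesis using e g M_le lenY_simps(1) by (simp add: idx_def L_def v_def)
  next
    case F1: False
    show ?thesis
    proof (cases "m = Suc M")
      case True
      have g1: "g = 1" using g m True above1[of m] by simp
      have pr: "1 \<le> p \<and> p \<le> L" using p_rng True m by simp
      have "vmap Y (Suc M) 1 = p" using True m lenY_simps(2)[of m] by simp
      then show ?thesis using e True g1 pr m lenY_simps(2)[of m] by (simp add: idx_def p_def)
    next
      case False
      then show ?thesis using e F1 m lenY_simps(2)[of m] by simp
    qed
  qed
next
  fix m g assume m: "m \<le> k" and g: "1 \<le> g" "g \<le> len D m"
  have e: "lab (mu Y) m g = lab (lab Y m (if m = M then g else 1)) m (if m = M then 1 else g)"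
    by (rule lab_mu[OF Y_shaped m g])
  show "lab (mu Y) m g = lab D m g"
  proof (cases "m = M")
    case True
    then show ?thesis using e g M_le lenY_simps(1) M1 by (simp add: idx_def L_def)
  next
    case F1: False
    show ?thesis
    proof (cases "m = M - 1")
      case True
      have nm: "\<not> M < M - 1" by simp
      then show ?thesis using e F1 m lenY_simps(2)[of m] run1 True by (simp add: idx_def)
    next
      case False
      then show ?thesis using e F1 m lenY_simps(2)[of m] by simp
    qed
  qed
qed

lemma SY: "{j. 1 < len Y j} = {M}"
proof -
  have "1 < len Y j \<longleftrightarrow> j = M" for j
    using L2 M_le lenY_simps(1) lenY_simps(2)[of j] lenY_simps(3)[of j] by (cases "j \<le> k"; cases "j = M") auto
  then show ?thesis by auto
qed

lemma Y_Mlev: "Mlev Y = M" "mlev Y = M" unfolding Mlev_def mlev_def SY by simp_all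

lemma Y_block: "is_block Y"
  unfolding is_block_def Y_Mlev nontrivial_def nondegenerate_def
proof (intro conjI ballI)
  fix i assume "i \<in> {1..dim Y}" then show "0 < len Y i" using lenY_simps(1) lenY_simps(2)[of i] L2 by (cases "i = M") auto
next
  show "\<exists>i\<in>{1..dim Y}. 1 < len Y i" using M_le L2 lenY_simps(1) by (intro bexI[of _ M]) auto
qed simp

lemma G_nontriv: assumes "1 \<le> i" "i \<le> L" "M \<le> j" "j \<le> k"
  shows "nontrivial (G i j) \<and> Mlev (G i j) < M"
proof -
  define T where "T = {m. 1 < len (G i j) m}"
  have TS: "T \<subseteq> {..<M}"
  proof
    fix m assume "m \<in> T"
    then have "m \<le> j" "m \<noteq> M" "m \<in> S" unfolding T_def S_def by (auto split: if_splits)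
    then show "m \<in> {..<M}" using Max_ge[OF finS, of m] M_max by auto
  qed
  have minT: "Min S \<in> T" using Min_in minlt assms unfolding T_def S_def by auto
  have finT: "finite T" using TS finite_subset by blast
  have "Max T \<in> T" using finT minT by (intro Max_in) auto
  moreover have "Mlev (G i j) = Max T" unfolding Mlev_def T_def by simp
  ultimately have mx: "Mlev (G i j) < M" using TS by auto
  have nd: "nondegenerate (G i j)" unfolding nondegenerate_def
  proof
    fix m assume "m \<in> {1..dim (G i j)}"
    then show "0 < len (G i j) m" using nondegD[of m] assms by (cases "m = M") auto
  qed
  have "Min S \<in> {1..j}" using Min_in S_sub minlt assms by auto
  then have "\<exists>m\<in>{1..dim (G i j)}. 1 < len (G i j) m" using minT unfolding T_def
    by (intro bexI[of _ "Min S"]) auto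
  then show ?thesis using nd mx unfolding nontrivial_def by simp
qed

lemma Y_minlab: assumes "1 \<le> j" "j \<le> L" shows "nontrivial (minlab Y j) \<and> Mlev (minlab Y j) < M"
proof (cases "M < k \<and> j = p")
  case True
  have "minlab Y j = G p k" using True lenY_simps(2)[of "Suc M"] lenY_simps(2)[of k] M_le
    unfolding minlab_def Y_Mlev by (simp add: idx_def)
  then show ?thesis using G_nontriv[of p k] p_rng True M_le by simp
next
  case False
  have "vmap Y (Suc M) 1 = (if M < k then p else 0)" using lenY_simps(2)[of "Suc M"] by auto
  then have "minlab Y j = G j M" using False assms M_le lenY_simps(1)
    unfolding minlab_def Y_Mlev by (auto simp: idx_def)
  then show ?thesis using G_nontriv[of j M] assms M_le by simp
qed

end



context mt6 begin

lemma uniq: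
  assumes yc: "y \<in> cells (TD (TD X)) k" and yb: "is_block y" and ym: "mu y = D"
    and ymin: "\<forall>j\<in>{1..len y (Mlev y)}. nontrivial (minlab y j) \<and> Mlev (minlab y j) < Mlev D"
    and yml: "mlev y = Mlev D" and yl: "len y (Mlev y) = len D (Mlev D)"
  shows "y = Y"
proof -
  have w: "lwf (TD X) k y" using yc by simp
  have dy: "dim y = k" and cy: "canonical y" and dgy: "diag_ok y" and lby: "labelling_ok (TD X) y"
    using w unfolding lwf_def diag_ok_def by auto
  have cy': "len y 0 = 1" "\<And>m. k < m \<Longrightarrow> len y m = 0"
    "\<And>m i. \<not> (1 \<le> m \<and> m \<le> k \<and> 1 \<le> i \<and> i \<le> len y m) \<Longrightarrow> vmap y m i = 0"
    using cy dy unfolding canonical_def by auto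
  define S' where "S' = {j. 1 < len y j}"
  have S'sub: "S' \<subseteq> {..k}"
  proof
    fix j assume "j \<in> S'"
    then have "1 < len y j" unfolding S'_def by simp
    then show "j \<in> {..k}" using cy'(2)[of j] by (cases "k < j") auto
  qed
  have finS': "finite S'" using S'sub finite_subset by blast
  have S'ne: "S' \<noteq> {}" using yb unfolding is_block_def nontrivial_def S'_def by auto
  have minS': "Min S' = M" using yml unfolding mlev_def S'_def M_def by simp
  have maxS': "Max S' = M" using yb minS' unfolding is_block_def mlev_def Mlev_def S'_def by simp
  have Mly: "Mlev y = M" using maxS' unfolding Mlev_def S'_def by simp
  have lyM: "len y M = L" using yl Mly unfolding L_def M_def by simp
  have le1: "j \<noteq> M \<Longrightarrow> len y j \<le> 1" for j
  proof (rule ccontr)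
    assume "j \<noteq> M" "\<not> len y j \<le> 1"
    then have "j \<in> S'" unfolding S'_def by simp
    then have "Min S' \<le> j" "j \<le> Max S'" using finS' by auto
    then show False using minS' maxS' \<open>j \<noteq> M\<close> by simp
  qed
  have nondy: "1 \<le> m \<Longrightarrow> m \<le> k \<Longrightarrow> 0 < len y m" for m
    using yb dy unfolding is_block_def nontrivial_def nondegenerate_def by auto
  have leny: "len y = lenY"
  proof
    fix m show "len y m = lenY m"
    proof (cases "k < m")
      case True then show ?thesis using cy' lenY_simps(3) by simp
    next
      case False
      show ?thesis
      proof (cases "m = M")
        case True then show ?thesis using lyM lenY_simps(1) by simp
      next
        case F2: False
        show ?thesis
        proof (cases "m = 0")
          case True then show ?thesis using cy' lenY_simps(2)[of 0] M2 by simp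
        next
          case False
          then show ?thesis using le1[OF F2] nondy[of m] \<open>\<not> k < m\<close> F2 lenY_simps(2)[of m] by simp
        qed
      qed
    qed
  qed
  have lenmu: "m \<le> k \<Longrightarrow> len (mu y) m = off y m (Suc (len y m))" for m using dy by (simp add: mu_def)
  have toplen: "len (lab y m 1) m = len D m" if "m \<le> k" "m \<noteq> M" for m
  proof -
    have "len y m = 1" using leny lenY_simps(2)[OF that] by simp
    then have "len (mu y) m = len (lab y m 1) m" using lenmu[OF that(1)] off2[of y m] by (simp add: numeral_2_eq_2)
    then show ?thesis using ym by simp
  qed
  have labwf: "lwf X m (lab y m a)" if "m \<le> k" "1 \<le> a" "a \<le> len y m" for m a
    using labelling_okC[OF lby, of m a] that dy by simp
  have vrng: "1 \<le> vmap y m a \<and> vmap y m a \<le> len y (m - 1)" if "1 \<le> m" "m \<le> k" "1 \<le> a" "a \<le> len y m" for m a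
    using diag_okD[OF dgy, of m a] that dy by simp
  have vm1: "vmap y m a = 1" if "1 \<le> m" "m \<le> k" "1 \<le> a" "a \<le> lenY m" "m \<noteq> Suc M" for m a
  proof -
    have "m - 1 \<noteq> M" "m - 1 \<le> k" using that by auto
    then have "len y (m - 1) = 1" using leny lenY_simps(2) by simp
    then show ?thesis using vrng[of m a] that leny by simp
  qed
  have pr': "1 \<le> vmap y (Suc M) 1 \<and> vmap y (Suc M) 1 \<le> L" if "M < k"
    using vrng[of "Suc M" 1] that leny lenY_simps(2)[of "Suc M"] lenY_simps(1) by simp
  have dsM: "dsrc (lab y (Suc M) 1) = lab y M (vmap y (Suc M) 1)" if "M < k"
  proof -
    define P where "P = {j\<in>{1..<1}. vmap y (Suc M) j = vmap y (Suc M) 1}"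
    have "P = {}" unfolding P_def by simp
    have "src (TD X) (Suc M) (lab y (Suc M) 1) = (if P = {} then lab y (Suc M - 1) (vmap y (Suc M) 1)
            else tgt (TD X) (Suc M) (lab y (Suc M) (Max P)))"
      by (rule labelling_okD[OF lby _ _ _ _ P_def]) (use that dy leny lenY_simps(2)[of "Suc M"] in auto)
    then show ?thesis using \<open>P = {}\<close> by simp
  qed
  have EM: "1 \<le> len (lab y M (vmap y (Suc M) 1)) M \<and> vmap (lab y (Suc M) 1) (Suc M) 1 \<le> len (lab y M (vmap y (Suc M) 1)) M
      \<and> 1 \<le> vmap (lab y (Suc M) 1) (Suc M) 1" if "M < k"
  proof -
    have l1: "1 \<le> len y (Suc M)" using leny lenY_simps(2)[of "Suc M"] that by simp
    have wE: "lwf X (Suc M) (lab y (Suc M) 1)" using labwf[of "Suc M" 1] that l1 by simp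
    have "len (lab y (Suc M) 1) (Suc M) = 1" using toplen[of "Suc M"] above1[of "Suc M"] that by simp
    then have "1 \<le> vmap (lab y (Suc M) 1) (Suc M) 1 \<and> vmap (lab y (Suc M) 1) (Suc M) 1 \<le> len (lab y (Suc M) 1) M"
      using diag_okD[of "lab y (Suc M) 1" "Suc M" 1] wE unfolding lwf_def by simp
    moreover have "len (lab y (Suc M) 1) M = len (lab y M (vmap y (Suc M) 1)) M"
      using arg_cong[OF dsM[OF that], of "\<lambda>E. len E M"] wE unfolding lwf_def by simp
    ultimately show ?thesis by simp
  qed
  have each1: "1 \<le> len (lab y M a) M" if "1 \<le> a" "a \<le> L" for a
  proof (cases "M < k \<and> a = vmap y (Suc M) 1")
    case True then show ?thesis using EM by auto
  next
    case False
    have "minlab y a = lab y M a" using False Mly dy unfolding minlab_def by auto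
    moreover have "nontrivial (minlab y a)" using ymin that Mly lyM by auto
    moreover have "dim (lab y M a) = M" using labwf[of M a] that M_le leny lenY_simps(1) unfolding lwf_def by simp
    ultimately have "\<forall>i\<in>{1..M}. 0 < len (lab y M a) i" unfolding nontrivial_def nondegenerate_def by simp
    then show ?thesis using M_le by force
  qed
  have topM: "\<forall>a\<in>{1..L}. len (lab y M a) M = 1"
  proof -
    define f where "f a = len (lab y M a) M" for a
    have "len (mu y) M = off y M (Suc L)" using lenmu[of M] M_le lyM by simp
    then have "(\<Sum>a\<in>{1..<Suc L}. f a) = L" using ym unfolding off_def f_def L_def by simp
    moreover have "(\<Sum>a\<in>{1..<Suc L}. f a) = (\<Sum>a\<in>{1..<Suc L}. 1 + (f a - 1))"
    proof (rule sum.cong)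
      fix x assume "x \<in> {1..<Suc L}"
      then have "1 \<le> f x" using each1[of x] unfolding f_def by simp
      then show "f x = 1 + (f x - 1)" by simp
    qed simp
    moreover have "(\<Sum>a\<in>{1..<Suc L}. 1 + (f a - 1)) = (\<Sum>a\<in>{1..<Suc L}. (1::nat)) + (\<Sum>a\<in>{1..<Suc L}. f a - 1)"
      by (rule sum.distrib)
    moreover have "(\<Sum>a\<in>{1..<Suc L}. (1::nat)) = L" by simp
    ultimately have "(\<Sum>a\<in>{1..<Suc L}. (f a - 1)) = 0" by linarith
    then have "\<forall>a\<in>{1..<Suc L}. f a - 1 = 0" using sum_eq_0_iff[of "{1..<Suc L}" "\<lambda>a. f a - 1"] by simp
    show ?thesis
    proof
      fix a assume a: "a \<in> {1..L}"
      then have "f a - 1 = 0" "1 \<le> f a" using \<open>\<forall>a\<in>{1..<Suc L}. f a - 1 = 0\<close> each1[of a] unfolding f_def by auto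
      then show "len (lab y M a) M = 1" unfolding f_def by simp
    qed
  qed
  have sh: "shaped y" unfolding shaped_def using dy leny vm1 pr' toplen topM by auto
  have pp: "vmap y (Suc M) 1 = p" if "M < k"
  proof -
    have e: "vmap (mu y) (Suc M) 1 = (vmap y (Suc M) 1 - 1) + vmap (lab y (Suc M) 1) (Suc M) 1"
      using vmap_mu[OF sh, of "Suc M" 1] that above1[of "Suc M"] by simp
    have "len (lab y M (vmap y (Suc M) 1)) M = 1" using topM pr'[OF that] by simp
    then have "vmap (lab y (Suc M) 1) (Suc M) 1 = 1" using EM[OF that] by simp
    then show ?thesis using e ym pr'[OF that] unfolding p_def by simp
  qed
  have vmy: "vmap y = vmap Y"
  proof (intro ext)
    fix m a
    show "vmap y m a = vmap Y m a"
    proof (cases "1 \<le> m \<and> m \<le> k \<and> 1 \<le> a \<and> a \<le> lenY m")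
      case True
      show ?thesis
      proof (cases "m = Suc M")
        case T2: True
        then have "a = 1" using True lenY_simps(2)[of m] by simp
        then show ?thesis using pp T2 True by simp
      next
        case False then show ?thesis using vm1 True by simp
      qed
    next
      case False then show ?thesis using cy'(3)[of m a] leny by auto
    qed
  qed
  have offs: "(if m = Suc M then vmap y (Suc M) 1 - 1 else 0) = (if m = Suc M then vmap Y (Suc M) 1 - 1 else 0)" for m
    using vmy by simp
  show ?thesis
  proof (rule TDTD_eq[OF w Y_lwf])
    show "len y = len Y" using leny by simp
    show "vmap y = vmap Y" by (rule vmy)
  next
    fix m a assume m: "m \<le> k" and a: "1 \<le> a" "a \<le> len y m"
    show "len (lab y m a) m = len (lab Y m a) m \<and>
        (\<forall>b\<in>{1..len (lab y m a) m}. (0 < m \<longrightarrow> vmap (lab y m a) m b = vmap (lab Y m a) m b)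
            \<and> lab (lab y m a) m b = lab (lab Y m a) m b)"
    proof (cases "m = M")
      case True
      have aL: "a \<le> L" using a True leny lenY_simps(1) by simp
      have l1: "len (lab y m a) m = 1" "len (lab Y m a) m = 1" using topM Y_shaped True a aL
        unfolding shaped_def by auto
      have gD: "a \<le> len D m" using aL True by (simp add: L_def)
      have v1: "vmap (mu y) m a = vmap (lab y m a) m 1" using vmap_mu[OF sh, of m a] True M_le m a gD by simp
      have v2: "vmap (mu Y) m a = vmap (lab Y m a) m 1" using vmap_mu[OF Y_shaped, of m a] True M_le m a gD by simp
      have b1: "lab (mu y) m a = lab (lab y m a) m 1" using lab_mu[OF sh, of m a] True m a gD by simp
      have b2: "lab (mu Y) m a = lab (lab Y m a) m 1" using lab_mu[OF Y_shaped, of m a] True m a gD by simp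
      show ?thesis using l1 v1 v2 b1 b2 ym Y_mu by auto
    next
      case False
      have a1: "a = 1" using a leny lenY_simps(2)[OF m False] by simp
      have l1: "len (lab y m a) m = len D m" "len (lab Y m a) m = len D m" using toplen[OF m False] Y_shaped m False a1
        unfolding shaped_def by auto
      have vv: "vmap (lab y m 1) m b = vmap (lab Y m 1) m b" if "0 < m" "1 \<le> b" "b \<le> len D m" for b
      proof -
        have "vmap (mu y) m b = (if m = Suc M then vmap y (Suc M) 1 - 1 else 0) + vmap (lab y m 1) m b"
          using vmap_mu[OF sh, of m b] False m that by simp
        moreover have "vmap (mu Y) m b = (if m = Suc M then vmap Y (Suc M) 1 - 1 else 0) + vmap (lab Y m 1) m b"
          using vmap_mu[OF Y_shaped, of m b] False m that by simp
        ultimately show ?thesis using ym Y_mu offs[of m] by simp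
      qed
      have ll: "lab (lab y m 1) m b = lab (lab Y m 1) m b" if "1 \<le> b" "b \<le> len D m" for b
        using lab_mu[OF sh, of m b] lab_mu[OF Y_shaped, of m b] False m that ym Y_mu by simp
      show ?thesis using l1 vv ll a1 by auto
    qed
  qed
qed

end

theorem mainTheorem6:
  fixes X :: "'a gset" and n k :: nat and D :: "'a ldiag"
  assumes "globular n X" and "k \<le> n"
    and "D \<in> cells (TD X) k"
    and "nontrivial D" and "\<not> is_block D"
  shows "\<exists>!y. y \<in> cells (TD (TD X)) k \<and> is_block y \<and> mu y = D \<and>
           (\<forall>j\<in>{1..len y (Mlev y)}. nontrivial (minlab y j) \<and> Mlev (minlab y j) < Mlev D) \<and>
           mlev y = Mlev D \<and>
           len y (Mlev y) = len D (Mlev D)"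
proof -
  interpret mt6 X n k D using assms by unfold_locales simp_all
  show ?thesis
  proof (rule ex1I[of _ Y])
    show "Y \<in> cells (TD (TD X)) k \<and> is_block Y \<and> mu Y = D \<and>
           (\<forall>j\<in>{1..len Y (Mlev Y)}. nontrivial (minlab Y j) \<and> Mlev (minlab Y j) < Mlev D) \<and>
           mlev Y = Mlev D \<and> len Y (Mlev Y) = len D (Mlev D)"
      using Y_lwf Y_block Y_mu Y_minlab Y_Mlev lenY_simps(1) unfolding M_def[symmetric] L_def[symmetric] by auto
  next
    fix y assume "y \<in> cells (TD (TD X)) k \<and> is_block y \<and> mu y = D \<and>
           (\<forall>j\<in>{1..len y (Mlev y)}. nontrivial (minlab y j) \<and> Mlev (minlab y j) < Mlev D) \<and>
           mlev y = Mlev D \<and> len y (Mlev y) = len D (Mlev D)"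
    then show "y = Y" using uniq by blast
  qed
qed



end
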